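(* Assume the following setup. Let $a,x,u,v$ be integers with $3\le a\le x$, $0\le u\le a-3$, and $u+2\le v\le\min\left(a-1,\frac{a(x-1)}{x}\right)$. Let $\lambda$ consist of $ua+v$ parts equal to $x$ and $v-(u+1)$ parts equal to $ax$, and let $n=|\lambda|$, so that $n=x[(a+1)(v-1)+1]$ and $n-1=xa(v-1)+xv-1$. For $0\le i\le n-2$ write uniquely \[ i=\frac{n}{x}r_i+(v-1)p_i+q_i \] with integers $0\le r_i<x$, $0\le p_i<a+2$, $0\le q_i<v-1$, $0\le (v-1)p_i+q_i<n/x$ (so $p_i=a+1$ implies $q_i=0$). Define $s_{1,i}=ix-(n-1)\left\lfloor\frac{ix}{n-1}\right\rfloor$. Then for every $0\le i\le n-2$, \[ s_{1,i}=r_i+x\big[(v-1)p_i+q_i\big]. \] *)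

theory Defs
  imports Complex_Main
begin

definition lam_size :: "int \<Rightarrow> int \<Rightarrow> int \<Rightarrow> int \<Rightarrow> int" where
  "lam_size a x u v = (u*a + v) * x + (v - (u+1)) * (a*x)"

definition s1 :: "int \<Rightarrow> int \<Rightarrow> int \<Rightarrow> int" where
  "s1 n x i = i*x - (n-1) * \<lfloor>real_of_int (i*x) / real_of_int (n-1)\<rfloor>"

end

theory Submission
  imports Defs
begin

theorem lemma4p5:
  fixes a x u v n i r p q :: int
  assumes "3 \<le> a" and "a \<le> x"
    and "0 \<le> u" and "u \<le> a - 3"
    and "u + 2 \<le> v" and "v \<le> a - 1"
    and "real_of_int v \<le> real_of_int (a*(x-1)) / real_of_int x"
    and "n = lam_size a x u v"
    and "0 \<le> i" and "i \<le> n - 2"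
    and "real_of_int i = real_of_int n / real_of_int x * real_of_int r
                         + real_of_int ((v-1)*p + q)"
    and "0 \<le> r" and "r < x"
    and "0 \<le> p" and "p < a + 2"
    and "0 \<le> q" and "q < v - 1"
    and "0 \<le> (v-1)*p + q"
    and "real_of_int ((v-1)*p + q) < real_of_int n / real_of_int x"
  shows "s1 n x i = r + x * ((v-1)*p + q)"
proof -
  define t where "t = (v-1)*p + q"
  define m where "m = (a+1)*(v-1)+1"
  have xpos: "x > 0" using assms by linarith
  have nm: "n = x*m" using assms(8) unfolding lam_size_def m_def by (simp add: algebra_simps)
  have nx: "real_of_int n / real_of_int x = real_of_int m" using nm xpos by simp
  have ieq: "i = m*r + t" using assms(11) unfolding nx t_def
    by (metis of_int_add of_int_eq_iff of_int_mult)
  have tm: "t < m" using assms(19) unfolding nx t_def of_int_less_iff by simp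
  have t0: "0 \<le> t" using assms(18) t_def by simp
  have "m \<ge> 1" using assms unfolding m_def by (smt (verit) mult_nonneg_nonneg)
  have le1: "r + t*x \<le> n - 1"
  proof -
    have "t*x \<le> (m-1)*x" using tm xpos by (intro mult_right_mono) auto
    thus ?thesis using nm assms(13) by (simp add: algebra_simps)
  qed
  have lt: "r + t*x < n - 1"
  proof (rule ccontr)
    assume "\<not> ?thesis"
    hence eq: "r + t*x = n - 1" using le1 by simp
    have "t*x \<le> (m-1)*x" using tm xpos by (intro mult_right_mono) auto
    hence "r = x - 1" using eq nm assms(13) by (simp add: algebra_simps)
    hence "t*x = (m-1)*x" using eq nm by (simp add: algebra_simps)
    hence "t = m - 1" using xpos by simp
    hence "i = n - 1" using ieq \<open>r = x - 1\<close> nm by (simp add: algebra_simps)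
    thus False using assms(10) by simp
  qed
  have npos: "n - 1 > 0" using lt t0 xpos assms(12) by (smt (verit) mult_nonneg_nonneg)
  have ix: "i*x = (n-1)*r + (r + t*x)" using ieq nm by (simp add: algebra_simps)
  have d0: "(r + t*x) div (n-1) = 0" using npos lt t0 xpos assms(12) by simp
  have d: "(i*x) div (n-1) = r"
    unfolding ix using d0 npos by (simp add: add.commute)
  have "\<lfloor>real_of_int (i*x) / real_of_int (n-1)\<rfloor> = r"
    using d by (metis floor_divide_of_int_eq)
  thus ?thesis unfolding s1_def t_def[symmetric] using ix by (simp add: algebra_simps)
qed

end
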